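(* Let $H'$ be the $3$-graph with vertex set $\{1,\dots,6\}$ and edge set $\{123,124,345,346,561,562,135,146,236,245\}$. A blow-up of $H'$ is a $3$-graph obtained by replacing each vertex $i$ of $H'$ by a set $V_i$ (the $V_i$ pairwise disjoint), where a triple of vertices is an edge if and only if its three vertices lie in three distinct sets $V_{i},V_{j},V_{k}$ with $ijk\in E(H')$. Then every blow-up of $H'$ on $n$ vertices has a coclique of size at least $n/2$, and of size strictly greater than $n/2$ if $n\not\equiv 0 \pmod 6$; moreover, when all $V_i$ have equal size $n/6$, the largest coclique has size exactly $n/2$.
   Context: A $3$-graph is a $3$-uniform hypergraph; $ijk$ denotes the triple $\{i,j,k\}$; a coclique is a set of vertices containing no edge. *)

theory Defs
  imports Complex_Main
begin

definition Hp_edges :: "nat set set" where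
  "Hp_edges = {{1,2,3},{1,2,4},{3,4,5},{3,4,6},{5,6,1},{5,6,2},{1,3,5},{1,4,6},{2,3,6},{2,4,5}}"

definition blowup_vertices :: "(nat \<Rightarrow> 'a set) \<Rightarrow> 'a set" where
  "blowup_vertices V = (\<Union>i\<in>{1..6}. V i)"

definition blowup_edges :: "(nat \<Rightarrow> 'a set) \<Rightarrow> 'a set set" where
  "blowup_edges V = {{x, y, z} | x y z i j k.
      x \<in> V i \<and> y \<in> V j \<and> z \<in> V k \<and> {i, j, k} \<in> Hp_edges}"

definition coclique :: "(nat \<Rightarrow> 'a set) \<Rightarrow> 'a set \<Rightarrow> bool" where
  "coclique V S \<longleftrightarrow> S \<subseteq> blowup_vertices V \<and> (\<forall>e\<in>blowup_edges V. \<not> e \<subseteq> S)"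

end

theory Submission
  imports Defs
begin

lemma Hp_sub: "e \<in> Hp_edges \<Longrightarrow> e \<subseteq> {1..6}"
  by (auto simp: Hp_edges_def)

lemma Hp_form: "e \<in> Hp_edges \<Longrightarrow> \<exists>p q r. e = {p,q,r}"
  by (auto simp: Hp_edges_def)

lemma cocl:
  assumes disj: "\<And>i j. i \<in> {1..6} \<Longrightarrow> j \<in> {1..6} \<Longrightarrow> i \<noteq> j \<Longrightarrow> V i \<inter> V j = {}"
    and T: "T \<subseteq> {1..6}" and ind: "\<forall>e\<in>Hp_edges. \<not> e \<subseteq> T"
  shows "coclique V (\<Union>i\<in>T. V i)"
proof -
  have mem: "p \<in> T" if "x \<in> V p" "p \<in> {1..6}" "x \<in> (\<Union>i\<in>T. V i)" for x p
  proof -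
    from that(3) obtain i where i: "i \<in> T" "x \<in> V i" by blast
    show ?thesis
    proof (cases "i = p")
      case True then show ?thesis using i by simp
    next
      case False
      then have "V i \<inter> V p = {}" using disj[of i p] i T that(2) by blast
      then show ?thesis using i that by blast
    qed
  qed
  have "\<not> e \<subseteq> (\<Union>i\<in>T. V i)" if e: "e \<in> blowup_edges V" for e
  proof
    assume sub: "e \<subseteq> (\<Union>i\<in>T. V i)"
    from e obtain x y z p q r where ex: "e = {x,y,z}" "x \<in> V p" "y \<in> V q" "z \<in> V r"
      "{p,q,r} \<in> Hp_edges" using e unfolding blowup_edges_def mem_Collect_eq by metis
    have "{p,q,r} \<subseteq> {1..6}" using Hp_sub[OF ex(5)] .
    then have r6: "p \<in> {1..6}" "q \<in> {1..6}" "r \<in> {1..6}" by auto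
    have "x \<in> (\<Union>i\<in>T. V i)" "y \<in> (\<Union>i\<in>T. V i)" "z \<in> (\<Union>i\<in>T. V i)"
      using sub ex(1) by auto
    then have "p \<in> T" "q \<in> T" "r \<in> T" using mem[OF ex(2) r6(1)] mem[OF ex(3) r6(2)] mem[OF ex(4) r6(3)] by auto
    then have "{p,q,r} \<subseteq> T" by simp
    then show False using ind ex(5) by blast
  qed
  moreover have "(\<Union>i\<in>T. V i) \<subseteq> blowup_vertices V" using T unfolding blowup_vertices_def by blast
  ultimately show ?thesis unfolding coclique_def by blast
qed

lemma card_union:
  fixes V :: "nat \<Rightarrow> 'b set"
  assumes fin: "\<And>i. i \<in> {1..6} \<Longrightarrow> finite (V i)"
    and disj: "\<And>i j. i \<in> {1..6} \<Longrightarrow> j \<in> {1..6} \<Longrightarrow> i \<noteq> j \<Longrightarrow> V i \<inter> V j = {}"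
    and T: "T \<subseteq> {1..6}"
  shows "card (\<Union>i\<in>T. V i) = (\<Sum>i\<in>T. card (V i))"
proof (rule card_UN_disjoint)
  show "finite T" using finite_subset[OF T] by simp
  show "\<forall>i\<in>T. finite (V i)" using fin T by blast
  show "\<forall>i\<in>T. \<forall>j\<in>T. i \<noteq> j \<longrightarrow> V i \<inter> V j = {}" using disj T by blast
qed

lemma upper:
  assumes S: "coclique V S"
  shows "\<exists>T. T \<subseteq> {1..6} \<and> (\<forall>e\<in>Hp_edges. \<not> e \<subseteq> T) \<and> S \<subseteq> (\<Union>i\<in>T. V i)"
proof -
  define T where "T = {i\<in>{1..6}. S \<inter> V i \<noteq> {}}"
  have "S \<subseteq> (\<Union>i\<in>T. V i)" using S unfolding coclique_def blowup_vertices_def T_def by blast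
  moreover have "\<not> e \<subseteq> T" if e: "e \<in> Hp_edges" for e
  proof
    assume sub: "e \<subseteq> T"
    from Hp_form[OF e] obtain p q r where pqr: "e = {p,q,r}" by blast
    then have "p \<in> T" "q \<in> T" "r \<in> T" using sub by auto
    then obtain x y z where xyz: "x \<in> S" "x \<in> V p" "y \<in> S" "y \<in> V q" "z \<in> S" "z \<in> V r"
      unfolding T_def by blast
    have ep: "{p,q,r} \<in> Hp_edges" using e pqr by simp
    have "{x,y,z} \<in> blowup_edges V" unfolding blowup_edges_def
      using xyz(2,4,6) ep by blast
    moreover have "{x,y,z} \<subseteq> S" using xyz(1,3,5) by simp
    ultimately show False using S unfolding coclique_def by blast
  qed
  moreover have "T \<subseteq> {1..6}" unfolding T_def by blast
  ultimately show ?thesis by blast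
qed

lemma ind_triples:
  "\<forall>e\<in>Hp_edges. \<not> e \<subseteq> {1,2,5::nat}" "\<forall>e\<in>Hp_edges. \<not> e \<subseteq> {1,2,6::nat}"
  "\<forall>e\<in>Hp_edges. \<not> e \<subseteq> {1,3,4::nat}" "\<forall>e\<in>Hp_edges. \<not> e \<subseteq> {1,3,6::nat}"
  "\<forall>e\<in>Hp_edges. \<not> e \<subseteq> {1,4,5::nat}" "\<forall>e\<in>Hp_edges. \<not> e \<subseteq> {2,3,4::nat}"
  "\<forall>e\<in>Hp_edges. \<not> e \<subseteq> {2,3,5::nat}" "\<forall>e\<in>Hp_edges. \<not> e \<subseteq> {2,4,6::nat}"
  "\<forall>e\<in>Hp_edges. \<not> e \<subseteq> {3,5,6::nat}" "\<forall>e\<in>Hp_edges. \<not> e \<subseteq> {4,5,6::nat}"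
  by (simp_all add: Hp_edges_def)


lemma comb:
  fixes c :: real
  assumes "c \<ge> 0" "\<not>(p1\<and>p2\<and>p3)" "\<not>(p1\<and>p2\<and>p4)" "\<not>(p3\<and>p4\<and>p5)" "\<not>(p3\<and>p4\<and>p6)"
   "\<not>(p5\<and>p6\<and>p1)" "\<not>(p5\<and>p6\<and>p2)" "\<not>(p1\<and>p3\<and>p5)" "\<not>(p1\<and>p4\<and>p6)" "\<not>(p2\<and>p3\<and>p6)" "\<not>(p2\<and>p4\<and>p5)"
  shows "(if p1 then c else 0) + (if p2 then c else 0) + (if p3 then c else 0) + (if p4 then c else 0)
     + (if p5 then c else 0) + (if p6 then c else 0) \<le> 3 * c"
  using assms by (cases p1; cases p2; cases p3; cases p4; cases p5; cases p6; simp)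

lemma Hp_mems:
  "{1,2,3} \<in> Hp_edges" "{1,2,4} \<in> Hp_edges" "{3,4,5} \<in> Hp_edges" "{3,4,6} \<in> Hp_edges"
  "{5,6,1} \<in> Hp_edges" "{5,6,2} \<in> Hp_edges" "{1,3,5} \<in> Hp_edges" "{1,4,6} \<in> Hp_edges"
  "{2,3,6} \<in> Hp_edges" "{2,4,5} \<in> Hp_edges"
  unfolding Hp_edges_def by simp_all

lemma gt_helper:
  fixes s m :: real
  assumes "\<exists>S. P S \<and> s \<le> c S" and "\<not> (\<exists>S. P S \<and> c S > m)"
  shows "\<not> (s > m)"
proof
  assume sm: "s > m"
  from assms(1) obtain S where "P S" "s \<le> c S" by blast
  moreover have "c S > m" using sm \<open>s \<le> c S\<close> by linarith
  ultimately show False using assms(2) by blast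
qed

lemma tri:
  assumes fin: "\<And>i. i \<in> {1..6} \<Longrightarrow> finite (V i)"
    and disj: "\<And>i j. i \<in> {1..6} \<Longrightarrow> j \<in> {1..6} \<Longrightarrow> i \<noteq> j \<Longrightarrow> V i \<inter> V j = {}"
    and ijk: "i \<in> {1..6}" "j \<in> {1..6}" "k \<in> {1..6}" "i \<noteq> j" "i \<noteq> k" "j \<noteq> k"
    and ind: "\<forall>e\<in>Hp_edges. \<not> e \<subseteq> {i,j,k}"
    and x: "x \<le> real (card (V i)) + real (card (V j)) + real (card (V k))"
  shows "\<exists>S. coclique V S \<and> x \<le> real (card S)"
proof -
  have T: "{i,j,k} \<subseteq> {1..6}" using ijk by auto
  have "coclique V (\<Union>l\<in>{i,j,k}. V l)" by (rule cocl[OF disj T ind])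
  moreover have "card (\<Union>l\<in>{i,j,k}. V l) = card (V i) + card (V j) + card (V k)"
    using card_union[where V=V, OF fin disj T] ijk by simp
  then have "x \<le> real (card (\<Union>l\<in>{i,j,k}. V l))" using x by simp
  ultimately show ?thesis by blast
qed

lemma tri_eq:
  assumes fin: "\<And>i. i \<in> {1..6} \<Longrightarrow> finite (V i)"
    and disj: "\<And>i j. i \<in> {1..6} \<Longrightarrow> j \<in> {1..6} \<Longrightarrow> i \<noteq> j \<Longrightarrow> V i \<inter> V j = {}"
  shows "\<exists>S. coclique V S \<and> real (card S) = real (card (V 1)) + real (card (V 2)) + real (card (V 5))"
proof -
  have T: "{1,2,5} \<subseteq> {1..6::nat}" by auto
  have "coclique V (\<Union>l\<in>{1,2,5}. V l)" by (rule cocl[OF disj T ind_triples(1)])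
  moreover have "card (\<Union>l\<in>{1,2,5}. V l) = card (V 1) + card (V 2) + card (V 5)"
    using card_union[where V=V, OF fin disj T] by simp
  then have "real (card (\<Union>l\<in>{1,2,5}. V l)) = real (card (V 1)) + real (card (V 2)) + real (card (V 5))" by simp
  ultimately show ?thesis by blast
qed

theorem mainTheorem13:
  fixes V :: "nat \<Rightarrow> 'a set" and n :: nat
  assumes fin: "\<And>i. i \<in> {1..6} \<Longrightarrow> finite (V i)"
    and disj: "\<And>i j. i \<in> {1..6} \<Longrightarrow> j \<in> {1..6} \<Longrightarrow> i \<noteq> j \<Longrightarrow> V i \<inter> V j = {}"
    and n_def: "n = card (blowup_vertices V)"
  shows "(\<exists>S. coclique V S \<and> real (card S) \<ge> real n / 2)
    \<and> (n mod 6 \<noteq> 0 \<longrightarrow> (\<exists>S. coclique V S \<and> real (card S) > real n / 2))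
    \<and> ((\<forall>i\<in>{1..6}. real (card (V i)) = real n / 6) \<longrightarrow>
          (\<exists>S. coclique V S \<and> real (card S) = real n / 2)
          \<and> (\<forall>S. coclique V S \<longrightarrow> real (card S) \<le> real n / 2))"
proof -
  define a where "a i = real (card (V i))" for i
  have six: "{1..6::nat} = {1,2,3,4,5,6}" by auto
  have "n = (\<Sum>i\<in>{1..6}. card (V i))"
    using n_def card_union[where V=V and T="{1..6}", OF fin disj] unfolding blowup_vertices_def by simp
  then have nsum: "real n = a 1 + a 2 + a 3 + a 4 + a 5 + a 6"
    unfolding six a_def by simp
  note T = tri[where V=V, OF fin disj, unfolded a_def[symmetric]]
  have t1: "\<And>x. x \<le> a 1 + a 2 + a 5 \<Longrightarrow> \<exists>S. coclique V S \<and> x \<le> real (card S)"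
    by (rule T) (simp_all add: Hp_edges_def)
  have t2: "\<And>x. x \<le> a 1 + a 2 + a 6 \<Longrightarrow> \<exists>S. coclique V S \<and> x \<le> real (card S)"
    by (rule T) (simp_all add: Hp_edges_def)
  have t3: "\<And>x. x \<le> a 1 + a 3 + a 4 \<Longrightarrow> \<exists>S. coclique V S \<and> x \<le> real (card S)"
    by (rule T) (simp_all add: Hp_edges_def)
  have t4: "\<And>x. x \<le> a 1 + a 3 + a 6 \<Longrightarrow> \<exists>S. coclique V S \<and> x \<le> real (card S)"
    by (rule T) (simp_all add: Hp_edges_def)
  have t5: "\<And>x. x \<le> a 1 + a 4 + a 5 \<Longrightarrow> \<exists>S. coclique V S \<and> x \<le> real (card S)"
    by (rule T) (simp_all add: Hp_edges_def)
  have t6: "\<And>x. x \<le> a 2 + a 3 + a 4 \<Longrightarrow> \<exists>S. coclique V S \<and> x \<le> real (card S)"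
    by (rule T) (simp_all add: Hp_edges_def)
  have t7: "\<And>x. x \<le> a 2 + a 3 + a 5 \<Longrightarrow> \<exists>S. coclique V S \<and> x \<le> real (card S)"
    by (rule T) (simp_all add: Hp_edges_def)
  have t8: "\<And>x. x \<le> a 2 + a 4 + a 6 \<Longrightarrow> \<exists>S. coclique V S \<and> x \<le> real (card S)"
    by (rule T) (simp_all add: Hp_edges_def)
  have t9: "\<And>x. x \<le> a 3 + a 5 + a 6 \<Longrightarrow> \<exists>S. coclique V S \<and> x \<le> real (card S)"
    by (rule T) (simp_all add: Hp_edges_def)
  have t10: "\<And>x. x \<le> a 4 + a 5 + a 6 \<Longrightarrow> \<exists>S. coclique V S \<and> x \<le> real (card S)"
    by (rule T) (simp_all add: Hp_edges_def)
  have P1: "\<exists>S. coclique V S \<and> real (card S) \<ge> real n / 2"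
  proof (rule ccontr)
    assume H: "\<not> ?thesis"
    have "\<not> (real n / 2 \<le> a 1 + a 2 + a 5)" using t1[of "real n / 2"] H by blast
    moreover have "\<not> (real n / 2 \<le> a 1 + a 2 + a 6)" using t2[of "real n / 2"] H by blast
    moreover have "\<not> (real n / 2 \<le> a 1 + a 3 + a 4)" using t3[of "real n / 2"] H by blast
    moreover have "\<not> (real n / 2 \<le> a 1 + a 3 + a 6)" using t4[of "real n / 2"] H by blast
    moreover have "\<not> (real n / 2 \<le> a 1 + a 4 + a 5)" using t5[of "real n / 2"] H by blast
    moreover have "\<not> (real n / 2 \<le> a 2 + a 3 + a 4)" using t6[of "real n / 2"] H by blast
    moreover have "\<not> (real n / 2 \<le> a 2 + a 3 + a 5)" using t7[of "real n / 2"] H by blast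
    moreover have "\<not> (real n / 2 \<le> a 2 + a 4 + a 6)" using t8[of "real n / 2"] H by blast
    moreover have "\<not> (real n / 2 \<le> a 3 + a 5 + a 6)" using t9[of "real n / 2"] H by blast
    moreover have "\<not> (real n / 2 \<le> a 4 + a 5 + a 6)" using t10[of "real n / 2"] H by blast
    ultimately show False using nsum by linarith
  qed
  have P2: "n mod 6 \<noteq> 0 \<longrightarrow> (\<exists>S. coclique V S \<and> real (card S) > real n / 2)"
  proof (intro impI, rule ccontr)
    assume m: "n mod 6 \<noteq> 0" and H: "\<not> (\<exists>S. coclique V S \<and> real (card S) > real n / 2)"
    have "\<not> (a 1 + a 2 + a 5 > real n / 2)" by (rule gt_helper[OF t1[OF order_refl] H])
    moreover have "\<not> (a 1 + a 2 + a 6 > real n / 2)" by (rule gt_helper[OF t2[OF order_refl] H])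
    moreover have "\<not> (a 1 + a 3 + a 4 > real n / 2)" by (rule gt_helper[OF t3[OF order_refl] H])
    moreover have "\<not> (a 1 + a 3 + a 6 > real n / 2)" by (rule gt_helper[OF t4[OF order_refl] H])
    moreover have "\<not> (a 1 + a 4 + a 5 > real n / 2)" by (rule gt_helper[OF t5[OF order_refl] H])
    moreover have "\<not> (a 2 + a 3 + a 4 > real n / 2)" by (rule gt_helper[OF t6[OF order_refl] H])
    moreover have "\<not> (a 2 + a 3 + a 5 > real n / 2)" by (rule gt_helper[OF t7[OF order_refl] H])
    moreover have "\<not> (a 2 + a 4 + a 6 > real n / 2)" by (rule gt_helper[OF t8[OF order_refl] H])
    moreover have "\<not> (a 3 + a 5 + a 6 > real n / 2)" by (rule gt_helper[OF t9[OF order_refl] H])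
    moreover have "\<not> (a 4 + a 5 + a 6 > real n / 2)" by (rule gt_helper[OF t10[OF order_refl] H])
    ultimately have "real n = 6 * a 1" using nsum by linarith
    then have "n = 6 * card (V 1)" unfolding a_def by linarith
    then show False using m by simp
  qed
  have P3: "(\<forall>i\<in>{1..6}. real (card (V i)) = real n / 6) \<longrightarrow>
          (\<exists>S. coclique V S \<and> real (card S) = real n / 2)
          \<and> (\<forall>S. coclique V S \<longrightarrow> real (card S) \<le> real n / 2)"
  proof (intro impI conjI allI)
    assume eq: "\<forall>i\<in>{1..6}. real (card (V i)) = real n / 6"
    then have e1: "a 1 = real n / 6" "a 2 = real n / 6" "a 5 = real n / 6"
      unfolding a_def by auto
    show "\<exists>S. coclique V S \<and> real (card S) = real n / 2"
      using tri_eq[where V=V, OF fin disj] e1 unfolding a_def by auto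
    fix S assume S: "coclique V S"
    from upper[OF S] obtain T where T: "T \<subseteq> {1..6}" "\<forall>e\<in>Hp_edges. \<not> e \<subseteq> T"
      "S \<subseteq> (\<Union>i\<in>T. V i)" by blast
    have finT: "finite T" using finite_subset[OF T(1)] by simp
    have finU: "finite (\<Union>i\<in>T. V i)" using finT T(1) fin by blast
    have "card S \<le> card (\<Union>i\<in>T. V i)" by (rule card_mono[OF finU T(3)])
    also have "\<dots> = (\<Sum>i\<in>T. card (V i))" by (rule card_union[where V=V, OF fin disj T(1)])
    finally have "real (card S) \<le> real (\<Sum>i\<in>T. card (V i))" by (simp only: of_nat_le_iff)
    then have cS: "real (card S) \<le> (\<Sum>i\<in>T. a i)" unfolding a_def by simp
    have "(\<Sum>i\<in>T. a i) = (\<Sum>i\<in>{1..6} \<inter> T. a i)" using T(1) by (simp add: Int_absorb1)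
    also have "\<dots> = (\<Sum>i\<in>{1..6}. if i \<in> T then a i else 0)" by (rule sum.inter_restrict) simp
    also have "\<dots> = (\<Sum>i\<in>{1..6}. if i \<in> T then real n / 6 else 0)"
      by (rule sum.cong) (use eq in \<open>auto simp: a_def\<close>)
    also have "\<dots> \<le> 3 * (real n / 6)"
    proof -
      have c: "real n / 6 \<ge> 0" by simp
      have i1: "\<not> (1 \<in> T \<and> 2 \<in> T \<and> 3 \<in> T)" using bspec[OF T(2) Hp_mems(1)] by simp
      have i2: "\<not> (1 \<in> T \<and> 2 \<in> T \<and> 4 \<in> T)" using bspec[OF T(2) Hp_mems(2)] by simp
      have i3: "\<not> (3 \<in> T \<and> 4 \<in> T \<and> 5 \<in> T)" using bspec[OF T(2) Hp_mems(3)] by simp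
      have i4: "\<not> (3 \<in> T \<and> 4 \<in> T \<and> 6 \<in> T)" using bspec[OF T(2) Hp_mems(4)] by simp
      have i5: "\<not> (5 \<in> T \<and> 6 \<in> T \<and> 1 \<in> T)" using bspec[OF T(2) Hp_mems(5)] by simp
      have i6: "\<not> (5 \<in> T \<and> 6 \<in> T \<and> 2 \<in> T)" using bspec[OF T(2) Hp_mems(6)] by simp
      have i7: "\<not> (1 \<in> T \<and> 3 \<in> T \<and> 5 \<in> T)" using bspec[OF T(2) Hp_mems(7)] by simp
      have i8: "\<not> (1 \<in> T \<and> 4 \<in> T \<and> 6 \<in> T)" using bspec[OF T(2) Hp_mems(8)] by simp
      have i9: "\<not> (2 \<in> T \<and> 3 \<in> T \<and> 6 \<in> T)" using bspec[OF T(2) Hp_mems(9)] by simp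
      have i10: "\<not> (2 \<in> T \<and> 4 \<in> T \<and> 5 \<in> T)" using bspec[OF T(2) Hp_mems(10)] by simp
      have "(\<Sum>i\<in>{1..6}. if i \<in> T then real n / 6 else 0) =
        (if 1 \<in> T then real n / 6 else 0) + (if 2 \<in> T then real n / 6 else 0) + (if 3 \<in> T then real n / 6 else 0)
        + (if 4 \<in> T then real n / 6 else 0) + (if 5 \<in> T then real n / 6 else 0) + (if 6 \<in> T then real n / 6 else 0)"
        unfolding six by (simp add: add.assoc split del: if_split)
      also have "\<dots> \<le> 3 * (real n / 6)"
        by (rule comb[OF c i1 i2 i3 i4 i5 i6 i7 i8 i9 i10])
      finally show ?thesis .
    qed
    finally show "real (card S) \<le> real n / 2" using cS by linarith
  qed
  show ?thesis using P1 P2 P3 by blast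
qed

end
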